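(* If two quadrilaterals in $K^2$ in standard form share the same coefficient and the same centroid, then both quadrilaterals have the same bisectors (with the same midpoints).
   Context: $K$ is a field of characteristic $\neq 2$; we work in $K^2$ inside the projective plane. A quadrilateral $Q=ABA'B'$ consists of four distinct lines $A,B,A',B'$ (sides), not all through one point, with adjacent sides ($A,B$; $B,A'$; $A',B'$; $B',A$) not parallel; opposite sides may be parallel. Vertices: $A\cap B$, $B\cap A'$, $A'\cap B'$, $B'\cap A$. The centroid is the average of the four vertices. $Q$ is in standard form if $A$ is the line $Y=0$ and $A'$ is the line $X=0$; its coefficient is the product of the slopes of $B$ and $B'$. A line $\ell$ crosses a pair $\{\ell_1,\ell_2\}$ if it is distinct from both and not parallel to both; $\mathrm{mid}_{\{\ell_1,\ell_2\}}(\ell)$ is the midpoint of the points where $\ell$ meets $\ell_1,\ell_2$ (the point at infinity of $\ell$ if one of them is at infinity). $\ell$ bisects $Q$ (is a bisector) if $\mathrm{mid}_{\mathsf P}(\ell)$ is the same for all pairs $\mathsf P$ among $\{A,A'\},\{B,B'\}$ that $\ell$ crosses; this common point is the midpoint of the bisector. A bisector is regarded as the line together with its midpoint. *)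

theory Defs
  imports Main
begin

text \<open>Affine lines in K^2 are represented as point sets; points of the projective plane
  are either affine points or points at infinity, the latter represented by the direction
  (one-dimensional subspace of difference vectors) of the lines through them.\<close>

datatype 'a ppoint = Aff "'a \<times> 'a" | AtInf "('a \<times> 'a) set"

definition is_line :: "('a::field \<times> 'a) set \<Rightarrow> bool" where
  "is_line L \<longleftrightarrow> (\<exists>a b c. (a \<noteq> 0 \<or> b \<noteq> 0) \<and> L = {(x, y). a * x + b * y = c})"

definition direction :: "('a::field \<times> 'a) set \<Rightarrow> ('a \<times> 'a) set" where
  "direction L = {(fst p - fst q, snd p - snd q) | p q. p \<in> L \<and> q \<in> L}"

definition parallel :: "('a::field \<times> 'a) set \<Rightarrow> ('a \<times> 'a) set \<Rightarrow> bool" where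
  "parallel L M \<longleftrightarrow> direction L = direction M"

definition meet :: "('a::field \<times> 'a) set \<Rightarrow> ('a \<times> 'a) set \<Rightarrow> 'a ppoint" where
  "meet L M = (if parallel L M then AtInf (direction L) else Aff (THE p. p \<in> L \<and> p \<in> M))"

definition midpt :: "'a::field \<times> 'a \<Rightarrow> 'a \<times> 'a \<Rightarrow> 'a \<times> 'a" where
  "midpt p q = ((fst p + fst q) / 2, (snd p + snd q) / 2)"

definition crosses :: "('a::field \<times> 'a) set \<Rightarrow> ('a \<times> 'a) set \<Rightarrow> ('a \<times> 'a) set \<Rightarrow> bool" where
  "crosses l L1 L2 \<longleftrightarrow> l \<noteq> L1 \<and> l \<noteq> L2 \<and> \<not> (parallel l L1 \<and> parallel l L2)"

definition mid :: "('a::field \<times> 'a) set \<Rightarrow> ('a \<times> 'a) set \<Rightarrow> ('a \<times> 'a) set \<Rightarrow> 'a ppoint" where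
  "mid l L1 L2 = (if parallel l L1 \<or> parallel l L2 then AtInf (direction l)
     else Aff (midpt (THE p. p \<in> l \<and> p \<in> L1) (THE p. p \<in> l \<and> p \<in> L2)))"

definition quadrilateral :: "('a::field \<times> 'a) set \<Rightarrow> ('a \<times> 'a) set \<Rightarrow> ('a \<times> 'a) set \<Rightarrow> ('a \<times> 'a) set \<Rightarrow> bool" where
  "quadrilateral A B A' B' \<longleftrightarrow>
     is_line A \<and> is_line B \<and> is_line A' \<and> is_line B' \<and>
     A \<noteq> B \<and> A \<noteq> A' \<and> A \<noteq> B' \<and> B \<noteq> A' \<and> B \<noteq> B' \<and> A' \<noteq> B' \<and>
     \<not> (\<exists>p. p \<in> A \<and> p \<in> B \<and> p \<in> A' \<and> p \<in> B') \<and>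
     \<not> parallel A B \<and> \<not> parallel B A' \<and> \<not> parallel A' B' \<and> \<not> parallel B' A"

definition vertex :: "('a::field \<times> 'a) set \<Rightarrow> ('a \<times> 'a) set \<Rightarrow> 'a \<times> 'a" where
  "vertex L M = (THE p. p \<in> L \<and> p \<in> M)"

definition centroid :: "('a::field \<times> 'a) set \<Rightarrow> ('a \<times> 'a) set \<Rightarrow> ('a \<times> 'a) set \<Rightarrow> ('a \<times> 'a) set \<Rightarrow> 'a \<times> 'a" where
  "centroid A B A' B' =
     (let v1 = vertex A B; v2 = vertex B A'; v3 = vertex A' B'; v4 = vertex B' A in
      ((fst v1 + fst v2 + fst v3 + fst v4) / 4, (snd v1 + snd v2 + snd v3 + snd v4) / 4))"

definition standard_form :: "('a::field \<times> 'a) set \<Rightarrow> ('a \<times> 'a) set \<Rightarrow> ('a \<times> 'a) set \<Rightarrow> ('a \<times> 'a) set \<Rightarrow> bool" where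
  "standard_form A B A' B' \<longleftrightarrow> A = {(x, y). y = 0} \<and> A' = {(x, y). x = 0}"

definition slope :: "('a::field \<times> 'a) set \<Rightarrow> 'a" where
  "slope L = (THE m. \<exists>c. L = {(x, y). y = m * x + c})"

definition coefficient :: "('a::field \<times> 'a) set \<Rightarrow> ('a \<times> 'a) set \<Rightarrow> ('a \<times> 'a) set \<Rightarrow> ('a \<times> 'a) set \<Rightarrow> 'a" where
  "coefficient A B A' B' = slope B * slope B'"

definition bisectors :: "('a::field \<times> 'a) set \<Rightarrow> ('a \<times> 'a) set \<Rightarrow> ('a \<times> 'a) set \<Rightarrow> ('a \<times> 'a) set
    \<Rightarrow> (('a \<times> 'a) set \<times> 'a ppoint) set" where
  "bisectors A B A' B' = {(l, m). is_line l \<and> (crosses l A A' \<or> crosses l B B') \<and>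
     (crosses l A A' \<longrightarrow> mid l A A' = m) \<and> (crosses l B B' \<longrightarrow> mid l B B' = m)}"

end

theory Submission imports Defs begin

definition Ls :: "'a::field \<Rightarrow> 'a \<Rightarrow> ('a \<times> 'a) set" where
  "Ls s t = {(x, y). y = s * x + t}"
definition Vl :: "'a::field \<Rightarrow> ('a \<times> 'a) set" where
  "Vl u = {(x, y). x = u}"

lemma dir_Ls: "direction (Ls s t) = {(d, s * d) | d. True}"
  unfolding direction_def Ls_def
proof (intro set_eqI iffI)
  fix z assume "z \<in> {(fst p - fst q, snd p - snd q) |p q. p \<in> {(x, y). y = s * x + t} \<and> q \<in> {(x, y). y = s * x + t}}"
  then show "z \<in> {(d, s * d) |d. True}" by (auto simp: algebra_simps)
next
  fix z :: "'a \<times> 'a" assume "z \<in> {(d, s * d) |d. True}"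
  then obtain d where z: "z = (d, s*d)" by auto
  show "z \<in> {(fst p - fst q, snd p - snd q) |p q. p \<in> {(x, y). y = s * x + t} \<and> q \<in> {(x, y). y = s * x + t}}"
    by (rule CollectI, rule exI[of _ "(d, s*d+t)"], rule exI[of _ "(0, t)"]) (simp add: z)
qed

lemma dir_Vl: "direction (Vl u) = {(0, d) | d. True}"
  unfolding direction_def Vl_def
proof (intro set_eqI iffI)
  fix z assume "z \<in> {(fst p - fst q, snd p - snd q) |p q. p \<in> {(x, y). x = u} \<and> q \<in> {(x, y). x = u}}"
  then show "z \<in> {(0, d) |d. True}" by auto
next
  fix z :: "'a \<times> 'a" assume "z \<in> {(0, d) |d. True}"
  then obtain d where z: "z = (0, d)" by auto
  show "z \<in> {(fst p - fst q, snd p - snd q) |p q. p \<in> {(x, y). x = u} \<and> q \<in> {(x, y). x = u}}"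
    by (rule CollectI, rule exI[of _ "(u, d)"], rule exI[of _ "(u, 0)"]) (simp add: z)
qed

lemma par_LL[simp]: "parallel (Ls s t) (Ls s' t') \<longleftrightarrow> s = s'"
proof
  assume "parallel (Ls s t) (Ls s' t')"
  then have "(1, s) \<in> direction (Ls s' t')" unfolding parallel_def dir_Ls[of s t] by auto
  then show "s = s'" unfolding dir_Ls by auto
qed (simp add: parallel_def dir_Ls)

lemma par_LV[simp]: "\<not> parallel (Ls s t) (Vl u)" "\<not> parallel (Vl u) (Ls s t)"
proof -
  have "(0, 1) \<notin> direction (Ls s t)" unfolding dir_Ls by auto
  moreover have "(0, 1) \<in> direction (Vl u)" unfolding dir_Vl by auto
  ultimately show "\<not> parallel (Ls s t) (Vl u)" "\<not> parallel (Vl u) (Ls s t)"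
    unfolding parallel_def by metis+
qed

lemma par_VV[simp]: "parallel (Vl u) (Vl u')"
  by (simp add: parallel_def dir_Vl)

lemma Ls_eq[simp]: "Ls s t = Ls s' t' \<longleftrightarrow> s = s' \<and> t = t'"
proof
  assume h: "Ls s t = Ls s' t'"
  have "(0, t) \<in> Ls s t" by (simp add: Ls_def)
  then have "(0, t) \<in> Ls s' t'" using h by simp
  then have t: "t = t'" by (simp add: Ls_def)
  have "(1, s + t) \<in> Ls s t" by (simp add: Ls_def)
  then have "(1, s + t) \<in> Ls s' t'" using h by simp
  then have "s = s'" using t by (simp add: Ls_def)
  with t show "s = s' \<and> t = t'" by simp
qed simp

lemma Vl_eq[simp]: "Vl u = Vl u' \<longleftrightarrow> u = u'"
proof
  assume h: "Vl u = Vl u'"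
  have "(u, 0) \<in> Vl u" by (simp add: Vl_def)
  then have "(u, 0) \<in> Vl u'" using h by simp
  then show "u = u'" by (simp add: Vl_def)
qed simp

lemma LV_neq[simp]: "Ls s t \<noteq> Vl u" "Vl u \<noteq> Ls s t"
proof -
  have "(u, s*u+t) \<in> Ls s t" "(u, s*u+t+1) \<notin> Ls s t" by (auto simp: Ls_def)
  moreover have "(u, s*u+t+1) \<in> Vl u" by (simp add: Vl_def)
  ultimately show "Ls s t \<noteq> Vl u" "Vl u \<noteq> Ls s t" by metis+
qed

lemma is_line_Ls[simp]: "is_line (Ls s t)"
  unfolding is_line_def Ls_def
  by (rule exI[of _ "-s"], rule exI[of _ 1], rule exI[of _ t]) (auto simp: algebra_simps)

lemma is_line_Vl[simp]: "is_line (Vl u)"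
  unfolding is_line_def Vl_def
  by (rule exI[of _ 1], rule exI[of _ 0], rule exI[of _ u]) auto

lemma line_cases:
  assumes "is_line L" shows "(\<exists>u. L = Vl u) \<or> (\<exists>s t. L = Ls s t)"
proof -
  obtain a b c where ab: "a \<noteq> 0 \<or> b \<noteq> 0" and L: "L = {(x, y). a * x + b * y = c}"
    using assms unfolding is_line_def by blast
  show ?thesis
  proof (cases "b = 0")
    case True
    then have "a \<noteq> 0" using ab by simp
    then have "L = Vl (c / a)" using True unfolding L Vl_def by (auto simp: field_simps)
    then show ?thesis by blast
  next
    case False
    then have "L = Ls (- a / b) (c / b)" unfolding L Ls_def by (auto simp: field_simps)
    then show ?thesis by blast
  qed
qed

lemma meet_LL:
  assumes "s \<noteq> s'"
  shows "(THE p. p \<in> Ls s t \<and> p \<in> Ls s' t') = ((t' - t) / (s - s'), s * ((t' - t) / (s - s')) + t)"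
proof (rule the_equality)
  have "s - s' \<noteq> 0" using assms by simp
  then show "((t' - t) / (s - s'), s * ((t' - t) / (s - s')) + t) \<in> Ls s t \<and>
    ((t' - t) / (s - s'), s * ((t' - t) / (s - s')) + t) \<in> Ls s' t'"
    by (simp add: Ls_def field_simps)
next
  fix p assume "p \<in> Ls s t \<and> p \<in> Ls s' t'"
  then obtain x y where p: "p = (x, y)" "y = s * x + t" "y = s' * x + t'" by (auto simp: Ls_def)
  then have "(s - s') * x = t' - t" by (simp add: algebra_simps)
  then have "x = (t' - t) / (s - s')" using assms by (simp add: field_simps)
  then show "p = ((t' - t) / (s - s'), s * ((t' - t) / (s - s')) + t)" using p by simp
qed

lemma meet_LV: "(THE p. p \<in> Ls s t \<and> p \<in> Vl u) = (u, s * u + t)"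
  by (rule the_equality) (auto simp: Ls_def Vl_def)

lemma meet_VL: "(THE p. p \<in> Vl u \<and> p \<in> Ls s t) = (u, s * u + t)"
  by (rule the_equality) (auto simp: Ls_def Vl_def)

lemma slope_Ls[simp]: "slope (Ls s t) = s"
  unfolding slope_def
proof (rule the_equality)
  show "\<exists>c. Ls s t = {(x, y). y = s * x + c}" by (auto simp: Ls_def)
next
  fix m assume "\<exists>c. Ls s t = {(x, y). y = m * x + c}"
  then obtain c where "Ls s t = Ls m c" by (auto simp: Ls_def)
  then show "m = s" by simp
qed


lemma alg1:
  fixes s t m m' c c' :: "'a::field"
  assumes "s \<noteq> 0" "s \<noteq> m" "s \<noteq> m'"
  shows "((c-t)/(s-m) + (c'-t)/(s-m') = -(t/s)) \<longleftrightarrow>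
    (c+c')*s^2 - t*s^2 - (c*m'+c'*m)*s + t*(m*m') = 0"
proof -
  have nz: "s - m \<noteq> 0" "s - m' \<noteq> 0" using assms by auto
  define D where "D = s*(s-m)*(s-m')"
  have D: "D \<noteq> 0" using nz assms(1) by (simp add: D_def)
  have e1: "(c-t)/(s-m) * D = (c-t)*s*(s-m')" using nz unfolding D_def by (simp add: field_simps)
  have e2: "(c'-t)/(s-m') * D = (c'-t)*s*(s-m)" using nz unfolding D_def by (simp add: field_simps)
  have e3: "t/s * D = t*(s-m)*(s-m')" using assms(1) unfolding D_def by (simp add: field_simps)
  have "((c-t)/(s-m) + (c'-t)/(s-m') = -(t/s)) \<longleftrightarrow> (c-t)/(s-m) + (c'-t)/(s-m') + t/s = 0"
    by (simp add: eq_neg_iff_add_eq_0)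
  also have "\<dots> \<longleftrightarrow> ((c-t)/(s-m) + (c'-t)/(s-m') + t/s) * D = 0" using D by simp
  also have "((c-t)/(s-m) + (c'-t)/(s-m') + t/s) * D = (c-t)*s*(s-m') + (c'-t)*s*(s-m) + t*(s-m)*(s-m')"
    by (simp only: distrib_right e1 e2 e3)
  also have "\<dots> = (c+c')*s^2 - t*s^2 - (c*m'+c'*m)*s + t*(m*m')"
    by (simp add: algebra_simps power2_eq_square)
  finally show ?thesis .
qed

lemma alg2:
  fixes s t x1 x2 :: "'a::field"
  assumes two: "(2::'a) \<noteq> 0" and s: "s \<noteq> 0"
  shows "midpt (x1, s*x1+t) (x2, s*x2+t) = (-(t/s)/2, t/2) \<longleftrightarrow> x1 + x2 = -(t/s)"
proof -
  have a: "midpt (x1, s*x1+t) (x2, s*x2+t) = (-(t/s)/2, t/2) \<longleftrightarrow>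
     (x1 + x2 = -(t/s) \<and> s*x1+t + (s*x2+t) = t)"
    unfolding midpt_def prod.inject fst_conv snd_conv divide_cancel_right
    using two by simp
  have b: "(s*x1+t + (s*x2+t) = t) \<longleftrightarrow> s * (x1 + x2) = -t"
    by (auto simp: algebra_simps eq_neg_iff_add_eq_0)
  have c: "s * (x1 + x2) = -t \<longleftrightarrow> x1 + x2 = -(t/s)" using s
    by (auto simp: field_simps)
  show ?thesis using a b c by auto
qed


definition Sset :: "'a::field \<Rightarrow> 'a \<Rightarrow> 'a \<Rightarrow> (('a \<times> 'a) set \<times> 'a ppoint) set" where
  "Sset X Y k = {(Ls 0 0, Aff (X/2, 0)), (Vl 0, Aff (0, Y/2))} \<union>
     {(Ls s t, Aff (-(t/s)/2, t/2)) | s t. s \<noteq> 0 \<and> Y*s^2 - t*s^2 + X*k*s + t*k = 0}"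

lemma mem_S_V: "(Vl u, p) \<in> Sset X Y k \<longleftrightarrow> u = 0 \<and> p = Aff (0, Y/2)"
  by (auto simp: Sset_def)

lemma mem_S_L: "(Ls s t, p) \<in> Sset X Y k \<longleftrightarrow>
   (s = 0 \<and> t = 0 \<and> p = Aff (X/2, 0)) \<or>
   (s \<noteq> 0 \<and> Y*s^2 - t*s^2 + X*k*s + t*k = 0 \<and> p = Aff (-(t/s)/2, t/2))"
  by (auto simp: Sset_def)

lemma bisV:
  assumes "m \<noteq> 0" "m' \<noteq> 0"
  shows "(Vl u, p) \<in> bisectors (Ls 0 0) (Ls m c) (Vl 0) (Ls m' c') \<longleftrightarrow> u = 0 \<and> p = Aff (0, (c+c')/2)"
  using assms
  by (cases "u = 0") (auto simp: bisectors_def crosses_def mid_def meet_LV meet_VL midpt_def)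


lemma bisL:
  fixes m m' c c' s t :: "'a::field"
  assumes two: "(2::'a) \<noteq> 0" and m: "m \<noteq> 0" and m': "m' \<noteq> 0"
  shows "(Ls s t, p) \<in> bisectors (Ls 0 0) (Ls m c) (Vl 0) (Ls m' c') \<longleftrightarrow>
   (s = 0 \<and> t = 0 \<and> p = Aff ((-c/m - c'/m')/2, 0)) \<or>
   (s \<noteq> 0 \<and> (c+c')*s^2 - t*s^2 - (c*m'+c'*m)*s + t*(m*m') = 0 \<and> p = Aff (-(t/s)/2, t/2))"
proof (cases "s = 0")
  case True
  show ?thesis
  proof (cases "t = 0")
    case True
    have e: "midpt (- (c / m), 0) (- (c' / m'), 0) = ((-c/m - c'/m')/2, 0)"
      by (simp add: midpt_def)
    show ?thesis using `s = 0` True m m'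
      by (auto simp: bisectors_def crosses_def mid_def meet_LL e)
  next
    case False
    show ?thesis using `s = 0` False m m'
      by (auto simp: bisectors_def crosses_def mid_def meet_LL meet_LV)
  qed
next
  case s0: False
  have eA: "midpt (- (t / s), 0) (0, t) = (-(t/s)/2, t/2)"
    by (simp add: midpt_def)
  have midA: "mid (Ls s t) (Ls 0 0) (Vl 0) = Aff (-(t/s)/2, t/2)"
    using s0 by (simp add: mid_def meet_LL meet_LV eA)
  have crA: "crosses (Ls s t) (Ls 0 0) (Vl 0)" using s0 by (simp add: crosses_def)
  have LHS: "(Ls s t, p) \<in> bisectors (Ls 0 0) (Ls m c) (Vl 0) (Ls m' c') \<longleftrightarrow>
     p = Aff (-(t/s)/2, t/2) \<and> (crosses (Ls s t) (Ls m c) (Ls m' c') \<longrightarrow> mid (Ls s t) (Ls m c) (Ls m' c') = p)"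
    using crA midA by (auto simp: bisectors_def)
  show ?thesis
  proof (cases "s = m \<or> s = m'")
    case False
    then have sm: "s \<noteq> m" "s \<noteq> m'" by auto
    have cr: "crosses (Ls s t) (Ls m c) (Ls m' c')" using sm by (simp add: crosses_def)
    have md: "mid (Ls s t) (Ls m c) (Ls m' c') = Aff (midpt ((c - t) / (s - m), s * ((c - t) / (s - m)) + t)
          ((c' - t) / (s - m'), s * ((c' - t) / (s - m')) + t))"
      using sm by (simp add: mid_def meet_LL)
    have key: "midpt ((c - t) / (s - m), s * ((c - t) / (s - m)) + t)
          ((c' - t) / (s - m'), s * ((c' - t) / (s - m')) + t) = (-(t/s)/2, t/2) \<longleftrightarrow>
        (c+c')*s^2 - t*s^2 - (c*m'+c'*m)*s + t*(m*m') = 0"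
      by (rule trans[OF alg2[OF two s0] alg1[OF s0 sm]])
    show ?thesis unfolding LHS md using cr key s0 by auto
  next
    case True
    then show ?thesis
    proof
      assume sm: "s = m"
      show ?thesis
      proof (cases "m = m'")
        case True
        have "(c+c')*s^2 - t*s^2 - (c*m'+c'*m)*s + t*(m*m') = 0" using sm True
          by (simp add: algebra_simps power2_eq_square)
        then show ?thesis unfolding LHS using sm True s0 by (simp add: crosses_def)
      next
        case False
        have P: "(c+c')*s^2 - t*s^2 - (c*m'+c'*m)*s + t*(m*m') = m*(m-m')*(c-t)" using sm
          by (simp add: algebra_simps power2_eq_square)
        show ?thesis
        proof (cases "t = c")
          case True
          then show ?thesis unfolding LHS P using sm s0 by (simp add: crosses_def)
        next
          case False
          then show ?thesis unfolding LHS P using sm s0 `m \<noteq> m'` m by (simp add: crosses_def mid_def)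
        qed
      qed
    next
      assume sm: "s = m'"
      show ?thesis
      proof (cases "m = m'")
        case True
        have "(c+c')*s^2 - t*s^2 - (c*m'+c'*m)*s + t*(m*m') = 0" using sm True
          by (simp add: algebra_simps power2_eq_square)
        then show ?thesis unfolding LHS using sm True s0 by (simp add: crosses_def)
      next
        case False
        have P: "(c+c')*s^2 - t*s^2 - (c*m'+c'*m)*s + t*(m*m') = m'*(m'-m)*(c'-t)" using sm
          by (simp add: algebra_simps power2_eq_square)
        show ?thesis
        proof (cases "t = c'")
          case True
          then show ?thesis unfolding LHS P using sm s0 by (simp add: crosses_def)
        next
          case False
          then show ?thesis unfolding LHS P using sm s0 `m \<noteq> m'` m' by (simp add: crosses_def mid_def)
        qed
      qed
    qed
  qed
qed


lemma bis_char:
  fixes m m' c c' :: "'a::field"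
  assumes two: "(2::'a) \<noteq> 0" and m: "m \<noteq> 0" and m': "m' \<noteq> 0"
  shows "bisectors (Ls 0 0) (Ls m c) (Vl 0) (Ls m' c') = Sset (-c/m - c'/m') (c + c') (m*m')"
proof (rule set_eqI)
  fix z :: "('a \<times> 'a) set \<times> 'a ppoint"
  obtain l p where z: "z = (l, p)" by (cases z)
  have Xk: "\<And>s. (-c/m - c'/m') * (m*m') * s = - (c*m'+c'*m)*s" using m m'
    by (simp add: field_simps)
  show "z \<in> bisectors (Ls 0 0) (Ls m c) (Vl 0) (Ls m' c') \<longleftrightarrow> z \<in> Sset (-c/m - c'/m') (c + c') (m*m')"
  proof (cases "is_line l")
    case False
    have "z \<notin> bisectors (Ls 0 0) (Ls m c) (Vl 0) (Ls m' c')" using False z by (simp add: bisectors_def)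
    moreover have "z \<notin> Sset (-c/m - c'/m') (c + c') (m*m')" using False z by (auto simp: Sset_def)
    ultimately show ?thesis by simp
  next
    case True
    then consider u where "l = Vl u" | s t where "l = Ls s t" using line_cases by blast
    then show ?thesis
    proof cases
      case 1
      then show ?thesis using z bisV[OF m m', of u p c c'] mem_S_V[of u p "-c/m - c'/m'" "c+c'" "m*m'"] by simp
    next
      case 2
      have P: "(c + c') * s\<^sup>2 - t * s\<^sup>2 + (-c/m - c'/m') * (m*m') * s + t * (m*m') =
        (c+c')*s^2 - t*s^2 - (c*m'+c'*m)*s + t*(m*m')" unfolding Xk by (simp add: algebra_simps)
      show ?thesis using 2 z bisL[OF two m m', of s t p c c'] mem_S_L[of s t p "-c/m - c'/m'" "c+c'" "m*m'"] P by simp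
    qed
  qed
qed

lemma side_form:
  assumes "is_line B" "\<not> parallel B (Ls 0 0)" "\<not> parallel B (Vl 0)"
  shows "\<exists>m c. m \<noteq> 0 \<and> B = Ls m c"
  using line_cases[OF assms(1)] assms(2,3) by auto

lemma parallel_sym: "parallel L M \<longleftrightarrow> parallel M L"
  by (auto simp: parallel_def)

lemma centroid_std:
  fixes m m' c c' :: "'a::field"
  assumes m: "m \<noteq> 0" and m': "m' \<noteq> 0"
  shows "centroid (Ls 0 0) (Ls m c) (Vl 0) (Ls m' c') = ((-c/m - c'/m')/4, (c + c')/4)"
proof -
  have v1: "vertex (Ls 0 0) (Ls m c) = (-c/m, 0)" unfolding vertex_def using m
    by (simp add: meet_LL)
  have v2: "vertex (Ls m c) (Vl 0) = (0, c)" unfolding vertex_def by (simp add: meet_LV)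
  have v3: "vertex (Vl 0) (Ls m' c') = (0, c')" unfolding vertex_def by (simp add: meet_VL)
  have v4: "vertex (Ls m' c') (Ls 0 0) = (-c'/m', 0)" unfolding vertex_def using m'
    by (simp add: meet_LL)
  have e1: "- c / m + 0 + 0 + - c' / m' = -c/m - c'/m'" by simp
  have e2: "(0::'a) + c + c' + 0 = c + c'" by simp
  show ?thesis unfolding centroid_def Let_def v1 v2 v3 v4 fst_conv snd_conv e1 e2 ..
qed

theorem corollary4p6:
  fixes A B A' B' C D C' D' :: "('a::field \<times> 'a) set"
  assumes char: "(2::'a) \<noteq> 0"
    and qQ: "quadrilateral A B A' B'" and sQ: "standard_form A B A' B'"
    and qR: "quadrilateral C D C' D'" and sR: "standard_form C D C' D'"
    and coeff: "coefficient A B A' B' = coefficient C D C' D'"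
    and cent: "centroid A B A' B' = centroid C D C' D'"
  shows "bisectors A B A' B' = bisectors C D C' D'"
proof -
  have H: "{(x, y). y = 0} = Ls (0::'a) 0" "{(x, y). x = 0} = Vl (0::'a)"
    by (auto simp: Ls_def Vl_def)
  have A: "A = Ls 0 0" "A' = Vl 0" using sQ H by (auto simp: standard_form_def)
  have C: "C = Ls 0 0" "C' = Vl 0" using sR H by (auto simp: standard_form_def)
  have qQ': "is_line B" "is_line B'" "\<not> parallel B (Ls 0 0)" "\<not> parallel B (Vl 0)"
    "\<not> parallel B' (Ls 0 0)" "\<not> parallel B' (Vl 0)"
    using qQ unfolding quadrilateral_def A parallel_sym[of "Ls 0 0"] parallel_sym[of "Vl 0"] by auto
  have qR': "is_line D" "is_line D'" "\<not> parallel D (Ls 0 0)" "\<not> parallel D (Vl 0)"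
    "\<not> parallel D' (Ls 0 0)" "\<not> parallel D' (Vl 0)"
    using qR unfolding quadrilateral_def C parallel_sym[of "Ls 0 0"] parallel_sym[of "Vl 0"] by auto
  obtain m c where mc: "m \<noteq> 0" "B = Ls m c" using side_form[OF qQ'(1,3,4)] by blast
  obtain m' c' where mc': "m' \<noteq> 0" "B' = Ls m' c'" using side_form[OF qQ'(2,5,6)] by blast
  obtain n d where nd: "n \<noteq> 0" "D = Ls n d" using side_form[OF qR'(1,3,4)] by blast
  obtain n' d' where nd': "n' \<noteq> 0" "D' = Ls n' d'" using side_form[OF qR'(2,5,6)] by blast
  have k: "m * m' = n * n'" using coeff unfolding coefficient_def A C mc nd mc' nd' by simp
  have four: "(4::'a) \<noteq> 0"
  proof -
    have e4: "(4::'a) = 2 * 2" by simp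
    show ?thesis unfolding e4 mult_eq_0_iff using char by blast
  qed
  have ce: "((-c/m - c'/m')/4, (c + c')/4) = ((-d/n - d'/n')/4, (d + d')/4)"
    using cent unfolding A C mc nd mc' nd' centroid_std[OF mc(1) mc'(1)] centroid_std[OF nd(1) nd'(1)] .
  have X1: "(-c/m - c'/m')/4 = (-d/n - d'/n')/4" using arg_cong[OF ce, of fst] by (simp only: fst_conv)
  have Y1: "(c + c')/4 = (d + d')/4" using arg_cong[OF ce, of snd] by (simp only: snd_conv)
  have X: "-c/m - c'/m' = -d/n - d'/n'" using X1 four unfolding divide_cancel_right by blast
  have Y: "c + c' = d + d'" using Y1 four unfolding divide_cancel_right by blast
  show ?thesis unfolding A C mc nd mc' nd'
    bis_char[OF char mc(1) mc'(1)] bis_char[OF char nd(1) nd'(1)] X Y k ..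
qed

end
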